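(* For every $n\ge1$, $$R^*_n=\inf_{\hat H}\ \sup_{\mu\in\mathbb{H}(\mathbb{X})}\mathbb{E}_{X_1,\dots,X_n\sim\mu^n}\Big[\big(\hat H(X_1,\dots,X_n)-H(\mu)\big)^2\Big]=\infty,$$ where the infimum is over all measurable functions $\hat H:\mathbb{X}^n\to\mathbb{R}$.
   Context: $\mathbb{X}$ is a countably infinite set; for a probability $\mu$ on $\mathbb{X}$, $f_\mu(x)=\mu(\{x\})$, $A_\mu=\{x:f_\mu(x)>0\}$, and $H(\mu)=-\sum_{x\in A_\mu}f_\mu(x)\log f_\mu(x)$. $\mathbb{H}(\mathbb{X})$ is the set of probability measures on $\mathbb{X}$ with $H(\mu)<\infty$. $\mu^n$ denotes the $n$-fold product measure (i.i.d. sample of size $n$). *)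

theory Defs
  imports "HOL-Probability.Probability"
begin

definition entropy :: "'a pmf \<Rightarrow> real" where
  "entropy p = infsum (\<lambda>x. - pmf p x * ln (pmf p x)) (set_pmf p)"

definition finite_entropy :: "'a pmf \<Rightarrow> bool" where
  "finite_entropy p \<longleftrightarrow> (\<lambda>x. - pmf p x * ln (pmf p x)) summable_on (set_pmf p)"

end

theory Submission
  imports Defs
begin

lemma key:
  fixes a :: "'a" and D :: real
  assumes inf: "infinite (UNIV :: 'a set)"
  shows "\<exists>p :: 'a pmf. finite_entropy p \<and> pmf p a = 1/2 \<and> entropy p \<ge> D"
proof -
  define K :: nat where "K = nat \<lceil>exp (2*D)\<rceil> + 1"
  have K: "real K \<ge> exp (2*D)" "K \<ge> 1"
  proof -
    have "exp (2*D) \<le> real (nat \<lceil>exp (2*D)\<rceil>)" by (rule real_nat_ceiling_ge)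
    then show "real K \<ge> exp (2*D)" unfolding K_def by linarith
    show "K \<ge> 1" unfolding K_def by simp
  qed
  have "infinite (UNIV - {a})" using inf by simp
  then obtain S where S: "finite S" "card S = K" "S \<subseteq> UNIV - {a}"
    using infinite_arbitrarily_large by blast
  have aS: "a \<notin> S" using S by auto
  define M where "M = replicate_mset K a + mset_set S"
  have sizeM: "size M = 2*K" using S by (simp add: M_def)
  have Mne: "M \<noteq> {#}" using sizeM K by auto
  define p where "p = pmf_of_multiset M"
  have setp: "set_pmf p = insert a S"
    using Mne K S by (auto simp: p_def M_def)
  have pa: "pmf p a = 1/2"
    using Mne K aS S by (simp add: p_def M_def sizeM)
  have ps: "pmf p s = 1/(2*K)" if "s \<in> S" for s
  proof -
    have "s \<noteq> a" using that aS by auto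
    then show ?thesis using Mne that S by (simp add: p_def M_def sizeM)
  qed
  have fe: "finite_entropy p" unfolding finite_entropy_def setp
    using S by (intro summable_on_finite) auto
  have "entropy p = (\<Sum>x\<in>insert a S. - pmf p x * ln (pmf p x))"
    unfolding entropy_def setp using S by simp
  also have "\<dots> = - pmf p a * ln (pmf p a) + (\<Sum>x\<in>S. - pmf p x * ln (pmf p x))"
    using S aS by simp
  also have "(\<Sum>x\<in>S. - pmf p x * ln (pmf p x)) = (\<Sum>x\<in>S. - (1/(2*K)) * ln (1/(2*K)))"
    using ps by simp
  also have "\<dots> = (1/2) * ln (2*K)"
    using S K by (simp add: ln_div field_simps)
  finally have ent: "entropy p = (1/2) * ln 2 + (1/2) * ln (2*K)"
    using pa by (simp add: ln_div)
  have "ln (real (2 * K)) \<ge> ln (real K)" using K by simp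
  moreover have "ln (exp (2*D)) \<le> ln (real K)" using K
    by (subst ln_le_cancel_iff) auto
  hence "ln (real K) \<ge> 2*D" by simp
  moreover have "ln 2 \<ge> (0::real)" by simp
  ultimately have "entropy p \<ge> D" unfolding ent by linarith
  then show ?thesis using fe pa by blast
qed

theorem mainTheorem10:
  fixes n :: nat
  assumes "infinite (UNIV :: 'a :: countable set)"
    and "n \<ge> 1"
  shows "(INF Hhat :: (nat \<Rightarrow> 'a) \<Rightarrow> real.
            SUP p \<in> {p :: 'a pmf. finite_entropy p}.
              \<integral>\<^sup>+ xs. ennreal ((Hhat xs - entropy p)\<^sup>2)
                 \<partial>(measure_pmf (Pi_pmf {..<n} undefined (\<lambda>_. p)))) = \<infinity>"
proof -
  obtain a :: 'a where True by blast
  define x0 :: "nat \<Rightarrow> 'a" where "x0 = (\<lambda>i. if i < n then a else undefined)"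
  have "(SUP p \<in> {p :: 'a pmf. finite_entropy p}.
              \<integral>\<^sup>+ xs. ennreal ((Hhat xs - entropy p)\<^sup>2)
                 \<partial>(measure_pmf (Pi_pmf {..<n} undefined (\<lambda>_. p)))) = \<infinity>"
    for Hhat :: "(nat \<Rightarrow> 'a) \<Rightarrow> real"
  proof -
    have "\<exists>p\<in>{p. finite_entropy p}. y < \<integral>\<^sup>+ xs. ennreal ((Hhat xs - entropy p)\<^sup>2)
                 \<partial>(measure_pmf (Pi_pmf {..<n} undefined (\<lambda>_. p)))" if "y < \<top>" for y
    proof -
      obtain r where r: "y = ennreal r" "r \<ge> 0" using \<open>y < \<top>\<close>
        by (cases y) auto
      define c where "c = Hhat x0"
      obtain p where p: "finite_entropy p" "pmf p a = 1/2"
        "entropy p \<ge> c + sqrt ((r+1) * 2^n)"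
        using key[OF assms(1)] by blast
      define q where "q = Pi_pmf {..<n} undefined (\<lambda>_. p)"
      have pq: "pmf q x0 = (1/2)^n"
        unfolding q_def x0_def by (simp add: pmf_Pi p(2))
      have "sqrt ((r+1) * 2^n) \<le> entropy p - c" using p by simp
      hence "(sqrt ((r+1) * 2^n))^2 \<le> (entropy p - c)^2"
        using r by (intro power_mono) auto
      hence sq: "(r+1) * 2^n \<le> (Hhat x0 - entropy p)^2" using r
        by (simp add: c_def power2_commute)
      have "(\<integral>\<^sup>+ xs. ennreal ((Hhat xs - entropy p)\<^sup>2) * indicator {x0} xs \<partial>measure_pmf q)
            \<le> (\<integral>\<^sup>+ xs. ennreal ((Hhat xs - entropy p)\<^sup>2) \<partial>measure_pmf q)"
        by (intro nn_integral_mono) (auto split: split_indicator)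
      moreover have "(\<integral>\<^sup>+ xs. ennreal ((Hhat xs - entropy p)\<^sup>2) * indicator {x0} xs \<partial>measure_pmf q)
          = ennreal ((Hhat x0 - entropy p)\<^sup>2) * ennreal ((1/2)^n)"
        by (simp add: emeasure_pmf_single pq)
      moreover have "ennreal ((Hhat x0 - entropy p)\<^sup>2) * ennreal ((1/2)^n)
          = ennreal ((Hhat x0 - entropy p)\<^sup>2 * (1/2)^n)"
        by (simp add: ennreal_mult)
      moreover have "(Hhat x0 - entropy p)\<^sup>2 * (1/2)^n \<ge> r + 1"
      proof -
        have "(r+1) * 2^n * (1/2)^n \<le> (Hhat x0 - entropy p)\<^sup>2 * (1/2)^n"
          using sq by (intro mult_right_mono) auto
        moreover have "(2::real)^n * (1/2)^n = 1" by (simp add: power_one_over field_simps)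
        ultimately show ?thesis by (simp add: mult.assoc)
      qed
      ultimately have "ennreal (r+1) \<le> \<integral>\<^sup>+ xs. ennreal ((Hhat xs - entropy p)\<^sup>2) \<partial>measure_pmf q"
        by (metis ennreal_leI order_trans)
      moreover have "y < ennreal (r+1)" using r by (simp add: ennreal_lessI)
      ultimately show ?thesis using p(1) unfolding q_def by force
    qed
    note H = this
    show ?thesis
    proof (rule ccontr)
      let ?S = "(SUP p \<in> {p :: 'a pmf. finite_entropy p}.
              \<integral>\<^sup>+ xs. ennreal ((Hhat xs - entropy p)\<^sup>2)
                 \<partial>(measure_pmf (Pi_pmf {..<n} undefined (\<lambda>_. p))))"
      assume "?S \<noteq> \<infinity>"
      hence "?S < \<top>" by (simp del: SUP_eq_top_iff Sup_eq_top_iff add: top.not_eq_extremum)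
      then obtain p where "p \<in> {p. finite_entropy p}" "?S < \<integral>\<^sup>+ xs. ennreal ((Hhat xs - entropy p)\<^sup>2)
                 \<partial>(measure_pmf (Pi_pmf {..<n} undefined (\<lambda>_. p)))"
        using H by blast
      moreover from this(1) have "\<integral>\<^sup>+ xs. ennreal ((Hhat xs - entropy p)\<^sup>2)
                 \<partial>(measure_pmf (Pi_pmf {..<n} undefined (\<lambda>_. p))) \<le> ?S"
        by (rule SUP_upper)
      ultimately show False by simp
    qed
  qed
  then show ?thesis by simp
qed

end
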